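(* For a positive integer $k$, let $\mathcal{H}'_k$ be the random hypergraph with vertex set $[\lceil k\log k\rceil]$ whose edges are $k$ sets $e_1,\dots,e_k$, each chosen independently and uniformly at random from the $k$-element subsets of $[\lceil k\log k\rceil]$. Then, with probability tending to $1$ as $k\to\infty$, for every set $X\subseteq[\lceil k\log k\rceil]$ of size $\lfloor\log^2k-10\log k\log\log k\rfloor$ there are at least $\frac{\log^9 k}{2}$ indices $j$ with $e_j\cap X=\emptyset$.
   Context: $\log$ denotes the natural logarithm; $[m]=\{1,\dots,m\}$. *)

theory Defs
  imports "HOL-Probability.Probability"
begin

definition nverts :: "nat \<Rightarrow> nat" where
  "nverts k = nat \<lceil>real k * ln (real k)\<rceil>"

definition ksubsets :: "nat \<Rightarrow> nat set set" where
  "ksubsets k = {A. A \<subseteq> {1..nverts k} \<and> card A = k}"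

(* H'_k: edges e_1..e_k chosen independently and uniformly from ksubsets k;
   an outcome is the edge family j \<mapsto> e_j, j \<in> {1..k} (value {} outside) *)
definition Hk :: "nat \<Rightarrow> (nat \<Rightarrow> nat set) pmf" where
  "Hk k = Pi_pmf {1..k} {} (\<lambda>_. pmf_of_set (ksubsets k))"

definition xsize :: "nat \<Rightarrow> nat" where
  "xsize k = nat \<lfloor>(ln (real k))^2 - 10 * ln (real k) * ln (ln (real k))\<rfloor>"

definition good :: "nat \<Rightarrow> (nat \<Rightarrow> nat set) \<Rightarrow> bool" where
  "good k e \<longleftrightarrow> (\<forall>X. X \<subseteq> {1..nverts k} \<and> card X = xsize k \<longrightarrow>
      real (card {j \<in> {1..k}. e j \<inter> X = {}}) \<ge> (ln (real k))^9 / 2)"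

end

theory Submission imports Defs "HOL-Real_Asymp.Real_Asymp" begin

lemma map_pmf_bool_bernoulli:
  fixes q :: "'a pmf"
  shows "map_pmf Q q = bernoulli_pmf (measure_pmf.prob q {x. Q x})"
proof (rule pmf_eqI)
  fix b :: bool
  have p01: "0 \<le> measure_pmf.prob q {x. Q x}" "measure_pmf.prob q {x. Q x} \<le> 1" by auto
  show "pmf (map_pmf Q q) b = pmf (bernoulli_pmf (measure_pmf.prob q {x. Q x})) b"
  proof (cases b)
    case True
    then show ?thesis using p01 by (simp add: pmf_map vimage_def)
  next
    case False
    have "measure_pmf.prob q {x. \<not> Q x} = 1 - measure_pmf.prob q {x. Q x}"
      using measure_pmf.prob_compl[of "{x. Q x}" q] by (simp add: Compl_eq_Diff_UNIV[symmetric] Collect_neg_eq)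
    then show ?thesis using p01 False by (simp add: pmf_map vimage_def)
  qed
qed

lemma count_binomial:
  fixes q :: "'a pmf"
  assumes "finite A"
  shows "map_pmf (\<lambda>e. card {j\<in>A. Q (e j)}) (Pi_pmf A d (\<lambda>_. q))
       = binomial_pmf (card A) (measure_pmf.prob q {x. Q x})"
proof -
  let ?p = "measure_pmf.prob q {x. Q x}"
  have "binomial_pmf (card A) ?p = map_pmf (\<lambda>f. card {x\<in>A. f x}) (Pi_pmf A (Q d) (\<lambda>_. bernoulli_pmf ?p))"
    by (rule binomial_pmf_altdef') (use assms in auto)
  also have "Pi_pmf A (Q d) (\<lambda>_. bernoulli_pmf ?p) = Pi_pmf A (Q d) (\<lambda>_. map_pmf Q q)"
    by (simp add: map_pmf_bool_bernoulli)
  also have "\<dots> = map_pmf (\<lambda>h. Q \<circ> h) (Pi_pmf A d (\<lambda>_. q))"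
    by (rule Pi_pmf_map) (use assms in auto)
  finally show ?thesis by (simp add: pmf.map_comp o_def)
qed

lemma binomial_tail:
  assumes p: "0 \<le> p" "p \<le> 1" and z: "0 < z" "z \<le> 1"
  shows "measure_pmf.prob (binomial_pmf n p) {i. real i \<le> m} \<le> (1 - p * (1 - z)) ^ n / z powr m"
proof -
  let ?f = "\<lambda>i. pmf (binomial_pmf n p) i * (z ^ i / z powr m)"
  have fin: "finite {i::nat. real i \<le> m}"
    by (rule finite_subset[of _ "{..nat \<lceil>m\<rceil>}"]) (auto, linarith)
  have "measure_pmf.prob (binomial_pmf n p) {i. real i \<le> m} = (\<Sum>i\<in>{i. real i \<le> m}. pmf (binomial_pmf n p) i)"
    using fin by (rule measure_measure_pmf_finite)
  also have "\<dots> \<le> (\<Sum>i\<in>{i. real i \<le> m}. ?f i)"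
  proof (rule sum_mono)
    fix i assume i: "i \<in> {i. real i \<le> m}"
    have "z powr m \<le> z powr (real i)"
      using i z by (intro powr_mono') auto
    also have "\<dots> = z ^ i" using z by (simp add: powr_realpow)
    finally have "1 \<le> z ^ i / z powr m" using z by simp
    then show "pmf (binomial_pmf n p) i \<le> ?f i"
      by (metis mult.right_neutral mult_left_mono pmf_nonneg)
  qed
  also have "\<dots> = (\<Sum>i\<in>{i. real i \<le> m} \<inter> {..n}. ?f i)"
    using fin by (intro sum.mono_neutral_right) (auto simp: p)
  also have "\<dots> \<le> (\<Sum>i\<in>{..n}. ?f i)"
    using z by (intro sum_mono2) auto
  also have "\<dots> = (\<Sum>i\<le>n. of_nat (n choose i) * (p * z) ^ i * (1 - p) ^ (n - i)) / z powr m"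
    using p by (simp add: sum_divide_distrib power_mult_distrib field_simps)
  also have "\<dots> = (p * z + (1 - p)) ^ n / z powr m"
    by (simp add: binomial_ring)
  finally show ?thesis by (simp add: algebra_simps)
qed

lemma binom_rec: "real (N choose Suc k) * real (Suc k) = real (N choose k) * real (N - k)"
proof -
  have "Suc k * (N choose Suc k) = (N - k) * (N choose k)"
    using binomial_absorption[of k N] binomial_absorb_comp[of N k] by simp
  then have "real (Suc k * (N choose Suc k)) = real ((N - k) * (N choose k))" by simp
  then show ?thesis by (simp only: of_nat_mult) (simp add: algebra_simps)
qed

lemma binom_ratio:
  assumes "s + K \<le> N" "k \<le> K" "K < N"
  shows "real (N - s choose k) \<ge> real (N choose k) * (1 - real s / (real N - real K)) ^ k"
  using assms(2)
proof (induction k)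
  case 0 then show ?case by simp
next
  case (Suc k)
  let ?x = "real s / (real N - real K)"
  have kK: "k \<le> K" using Suc by simp
  have NK: "real N - real K > 0" using assms by simp
  have x1: "1 - ?x \<ge> 0" using assms NK by (simp add: field_simps)
  have IH: "real (N - s choose k) \<ge> real (N choose k) * (1 - ?x) ^ k" using Suc kK by simp
  have key: "real (N - k) * (1 - ?x) \<le> real (N - s - k)"
  proof -
    have e1: "real (N - k) = real N - real k" and e2: "real (N - s - k) = real N - real s - real k"
      using assms Suc by auto
    have r1: "1 \<le> (real N - real k) / (real N - real K)"
      using NK Suc by (simp add: le_divide_eq)
    have "real s * 1 \<le> real s * ((real N - real k) / (real N - real K))"
      using r1 by (intro mult_left_mono) auto
    then show ?thesis unfolding e1 e2 using NK by (simp add: field_simps)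
  qed
  have "real (N choose Suc k) * (1 - ?x) ^ Suc k * real (Suc k)
      = (real (N choose Suc k) * real (Suc k)) * (1 - ?x) ^ k * (1 - ?x)"
    by (simp add: mult_ac del: of_nat_Suc)
  also have "\<dots> = real (N choose k) * (1 - ?x) ^ k * (real (N - k) * (1 - ?x))"
    by (simp only: binom_rec) (simp only: mult_ac)
  also have "\<dots> \<le> real (N - s choose k) * real (N - s - k)"
    using IH key x1 by (intro mult_mono) auto
  also have "\<dots> = real (N - s choose Suc k) * real (Suc k)"
    by (simp only: binom_rec)
  finally show ?case by (simp del: of_nat_Suc)
qed

lemma one_minus_ge_exp:
  fixes x :: real assumes "0 \<le> x" "x < 1"
  shows "exp (- (x / (1 - x))) \<le> 1 - x"
proof -
  have "1 + x / (1 - x) \<le> exp (x / (1 - x))" by (rule exp_ge_add_one_self)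
  moreover have "1 + x / (1 - x) = 1 / (1 - x)" using assms by (simp add: field_simps)
  ultimately have "1 / (1 - x) \<le> exp (x / (1 - x))" by simp
  then show ?thesis using assms by (simp add: exp_minus field_simps)
qed

lemma pX_bound:
  fixes k :: nat
  assumes X: "X \<subseteq> {1..nverts k}" "card X = s" and sk: "s + k \<le> nverts k" and s0: "s > 0"
  shows "measure_pmf.prob (pmf_of_set (ksubsets k)) {A. A \<inter> X = {}}
      \<ge> (1 - real s / (real (nverts k) - real k)) ^ k"
proof -
  let ?n = "nverts k"
  have fin: "finite (ksubsets k)" unfolding ksubsets_def
    by (rule finite_subset[of _ "Pow {1..?n}"]) auto
  have ck: "card (ksubsets k) = ?n choose k" unfolding ksubsets_def using n_subsets[of "{1..?n}" k] by simp
  have ne: "ksubsets k \<noteq> {}" using ck sk by (metis card.empty zero_less_binomial_iff add_leD2 le_neq_implies_less less_irrefl_nat not_less)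
  have "ksubsets k \<inter> {A. A \<inter> X = {}} = {A. A \<subseteq> {1..?n} - X \<and> card A = k}"
    unfolding ksubsets_def by auto
  moreover have "card ({1..?n} - X) = ?n - s" using X by (simp add: card_Diff_subset finite_subset)
  ultimately have c2: "card (ksubsets k \<inter> {A. A \<inter> X = {}}) = (?n - s) choose k"
    using n_subsets[of "{1..?n} - X" k] by simp
  have pr: "measure_pmf.prob (pmf_of_set (ksubsets k)) {A. A \<inter> X = {}} = real ((?n - s) choose k) / real (?n choose k)"
    using measure_pmf_of_set[OF ne fin] c2 ck by simp
  have pos: "real (?n choose k) > 0" using sk by simp
  have "real (?n - s choose k) \<ge> real (?n choose k) * (1 - real s / (real ?n - real k)) ^ k"
    by (rule binom_ratio) (use sk s0 in auto)
  then show ?thesis unfolding pr using pos by (simp add: field_simps)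
qed

lemma bad_bound:
  fixes k :: nat
  defines "L \<equiv> ln (real k)"
  defines "\<sigma> \<equiv> L^2 - 10 * L * ln L"
  defines "m \<equiv> L^9 / 2"
  defines "g \<equiv> real k * exp (- real k * \<sigma> / (real k * L - real k - \<sigma>))"
  assumes k3: "k \<ge> 3" and s1: "\<sigma> \<ge> 1" and den: "real k * L - real k - \<sigma> > 0"
  shows "measure_pmf.prob (Hk k) {e. good k e} \<ge> 1 - exp (\<sigma> * ln (real k * L + 1) + m - g / 2)"
proof -
  define n where "n = nverts k"
  define s where "s = xsize k"
  define Xs where "Xs = {X. X \<subseteq> {1..n} \<and> card X = s}"
  define z :: real where "z = exp (-1)"
  have L0: "L > 0" unfolding L_def using k3 by simp
  have sle: "real s \<le> \<sigma>" and sge: "s \<ge> 1"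
    unfolding s_def xsize_def \<sigma>_def L_def using s1 unfolding \<sigma>_def L_def by linarith+
  have kL0: "real k * ln (real k) \<ge> 0" using L0 unfolding L_def by simp
  have nge: "real n \<ge> real k * L" and nle: "real n \<le> real k * L + 1"
    unfolding n_def nverts_def L_def using kL0 by linarith+
  have skn: "real s + real k < real n" using sle nge den by linarith
  then have sk: "s + k \<le> n" by linarith
  have g0: "g \<ge> 0" unfolding g_def by simp
  have z: "0 < z" "z \<le> 1" "1 - z \<ge> 1/2" unfolding z_def
    using exp_ge_add_one_self[of 1] by (auto simp: exp_minus field_simps)
  have zp: "z powr m > 0" using z by simp
  have zm: "z powr m = exp (- m)" unfolding z_def by (simp add: powr_def)
  have tm: "measure_pmf.prob (Hk k) {e. real (card {j\<in>{1..k}. e j \<inter> X = {}}) \<le> m} \<le> exp (m - g / 2)"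
    if X: "X \<in> Xs" for X
  proof -
    let ?q = "pmf_of_set (ksubsets k)"
    let ?p = "measure_pmf.prob ?q {A. A \<inter> X = {}}"
    have p01: "0 \<le> ?p" "?p \<le> 1" by auto
    have pl: "?p \<ge> (1 - real s / (real n - real k)) ^ k"
      using pX_bound[of X k s] X sk sge unfolding Xs_def n_def by auto
    have x: "0 \<le> real s / (real n - real k)" "real s / (real n - real k) < 1"
      using skn by (auto simp: field_simps)
    have xe: "real s / (real n - real k) / (1 - real s / (real n - real k)) = real s / (real n - real k - real s)"
    proof -
      have d1: "real n - real k \<noteq> 0" and d2: "real n - real k - real s \<noteq> 0" using skn by auto
      have "1 - real s / (real n - real k) = (real n - real k - real s) / (real n - real k)"
        using d1 by (simp add: field_simps)
      then show ?thesis using d1 d2 by simp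
    qed
    have "exp (- (real s / (real n - real k - real s))) ^ k \<le> (1 - real s / (real n - real k)) ^ k"
      using one_minus_ge_exp[OF x] xe by (intro power_mono) auto
    also have "exp (- (real s / (real n - real k - real s))) ^ k = exp (- real k * (real s / (real n - real k - real s)))"
      by (simp add: exp_of_nat_mult[symmetric])
    finally have pl2: "?p \<ge> exp (- real k * (real s / (real n - real k - real s)))" using pl by linarith
    have fr: "real s / (real n - real k - real s) \<le> \<sigma> / (real k * L - real k - \<sigma>)"
      using sle den nge s1 by (intro frac_le) auto
    then have "exp (- real k * \<sigma> / (real k * L - real k - \<sigma>)) \<le> exp (- real k * (real s / (real n - real k - real s)))"
    proof -
      have a: "real k * (real s / (real n - real k - real s)) \<le> real k * (\<sigma> / (real k * L - real k - \<sigma>))"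
        using mult_left_mono[OF fr, of "real k"] by simp
      have b: "- real k * \<sigma> / (real k * L - real k - \<sigma>) = - (real k * (\<sigma> / (real k * L - real k - \<sigma>)))"
        by simp
      show ?thesis unfolding b using a by simp
    qed
    then have "exp (- real k * \<sigma> / (real k * L - real k - \<sigma>)) \<le> ?p" using pl2 by linarith
    then have kp: "real k * ?p \<ge> g" unfolding g_def by (intro mult_left_mono) auto
    have "measure_pmf.prob (Hk k) {e. real (card {j\<in>{1..k}. e j \<inter> X = {}}) \<le> m}
        = measure_pmf.prob (map_pmf (\<lambda>e. card {j\<in>{1..k}. e j \<inter> X = {}}) (Hk k)) {i. real i \<le> m}"
      by (simp add: vimage_def)
    also have "map_pmf (\<lambda>e. card {j\<in>{1..k}. e j \<inter> X = {}}) (Hk k) = binomial_pmf k ?p"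
      unfolding Hk_def using count_binomial[of "{1..k}" "\<lambda>A. A \<inter> X = {}" "{}" ?q] by simp
    also have "measure_pmf.prob (binomial_pmf k ?p) {i. real i \<le> m} \<le> (1 - ?p * (1 - z)) ^ k / z powr m"
      by (rule binomial_tail) (use p01 z in auto)
    also have "(1 - ?p * (1 - z)) ^ k \<le> exp (- (?p * (1 - z))) ^ k"
      using p01 z exp_ge_add_one_self[of "- (?p * (1 - z))"]
      by (intro power_mono) (auto simp: mult_le_one)
    also have "exp (- (?p * (1 - z))) ^ k = exp (- (real k * ?p) * (1 - z))"
      by (simp add: exp_of_nat_mult[symmetric] algebra_simps)
    also have "\<dots> \<le> exp (- g / 2)"
    proof -
      have "g / 2 \<le> real k * ?p * (1/2)" using kp by simp
      also have "\<dots> \<le> real k * ?p * (1 - z)" using z p01 by (intro mult_left_mono) auto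
      finally have "g / 2 \<le> real k * ?p * (1 - z)" .
      then show ?thesis by simp
    qed
    also have "exp (- g / 2) / z powr m = exp (m - g / 2)"
      unfolding zm by (simp add: exp_diff[symmetric])
    finally show ?thesis using zp by (simp add: divide_right_mono)
  qed
  have finXs: "finite Xs" unfolding Xs_def by (rule finite_subset[of _ "Pow {1..n}"]) auto
  have cardXs: "card Xs = n choose s" unfolding Xs_def using n_subsets[of "{1..n}" s] by simp
  have "real (card Xs) \<le> real n ^ s" unfolding cardXs using binomial_le_pow[of s n] sk
    by (metis add_leD1 of_nat_le_iff of_nat_power)
  also have "real n ^ s = exp (real s * ln (real n))" using skn
    by (subst exp_of_nat_mult) auto
  also have "\<dots> \<le> exp (\<sigma> * ln (real k * L + 1))"
  proof -
    have n1: "real n \<ge> 1" using skn sge by linarith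
    have "real s * ln (real n) \<le> \<sigma> * ln (real n)" using sle n1 by (intro mult_right_mono) auto
    also have "\<dots> \<le> \<sigma> * ln (real k * L + 1)" using nle n1 s1 by (intro mult_left_mono) auto
    finally have "real s * ln (real n) \<le> \<sigma> * ln (real k * L + 1)" .
    then show ?thesis by simp
  qed
  finally have cX: "real (card Xs) \<le> exp (\<sigma> * ln (real k * L + 1))" .
  have sub: "{e. \<not> good k e} \<subseteq> (\<Union>X\<in>Xs. {e. real (card {j\<in>{1..k}. e j \<inter> X = {}}) \<le> m})"
    unfolding good_def Xs_def m_def L_def n_def s_def by force
  have "measure_pmf.prob (Hk k) {e. \<not> good k e} \<le> measure_pmf.prob (Hk k) (\<Union>X\<in>Xs. {e. real (card {j\<in>{1..k}. e j \<inter> X = {}}) \<le> m})"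
    using sub by (intro measure_pmf.finite_measure_mono) auto
  also have "\<dots> \<le> (\<Sum>X\<in>Xs. measure_pmf.prob (Hk k) {e. real (card {j\<in>{1..k}. e j \<inter> X = {}}) \<le> m})"
    using finXs by (intro measure_pmf.finite_measure_subadditive_finite) auto
  also have "\<dots> \<le> (\<Sum>X\<in>Xs. exp (m - g / 2))" using tm by (intro sum_mono) auto
  also have "\<dots> = real (card Xs) * exp (m - g / 2)" by simp
  also have "\<dots> \<le> exp (\<sigma> * ln (real k * L + 1)) * exp (m - g / 2)" using cX by (intro mult_right_mono) auto
  also have "\<dots> = exp (\<sigma> * ln (real k * L + 1) + m - g / 2)" by (simp add: exp_add[symmetric])
  finally have bad: "measure_pmf.prob (Hk k) {e. \<not> good k e} \<le> exp (\<sigma> * ln (real k * L + 1) + m - g / 2)" .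
  have "measure_pmf.prob (Hk k) {e. \<not> good k e} = 1 - measure_pmf.prob (Hk k) {e. good k e}"
    using measure_pmf.prob_compl[of "{e. good k e}" "Hk k"] by (simp add: Compl_eq_Diff_UNIV[symmetric] Collect_neg_eq)
  then show ?thesis using bad by linarith
qed

theorem lemma1:
  shows "(\<lambda>k. measure_pmf.prob (Hk k) {e. good k e}) \<longlonglongrightarrow> 1"
proof -
  define b where "b = (\<lambda>k::nat. exp ((ln (real k)^2 - 10 * ln (real k) * ln (ln (real k))) * ln (real k * ln (real k) + 1)
     + ln (real k)^9 / 2 - real k * exp (- real k * (ln (real k)^2 - 10 * ln (real k) * ln (ln (real k)))
        / (real k * ln (real k) - real k - (ln (real k)^2 - 10 * ln (real k) * ln (ln (real k))))) / 2))"
  have lim: "b \<longlonglongrightarrow> 0" unfolding b_def by real_asymp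
  have e1: "eventually (\<lambda>k::nat. k \<ge> 3) sequentially" by (rule eventually_ge_at_top)
  have e2: "eventually (\<lambda>k::nat. ln (real k)^2 - 10 * ln (real k) * ln (ln (real k)) \<ge> 1) sequentially"
    by real_asymp
  have e3: "eventually (\<lambda>k::nat. real k * ln (real k) - real k - (ln (real k)^2 - 10 * ln (real k) * ln (ln (real k))) > 0) sequentially"
    by real_asymp
  have ev: "eventually (\<lambda>k. 1 - b k \<le> measure_pmf.prob (Hk k) {e. good k e}) sequentially"
    using e1 e2 e3
  proof eventually_elim
    case (elim k)
    then show ?case unfolding b_def using bad_bound[of k] by simp
  qed
  have lim1: "(\<lambda>k. 1 - b k) \<longlonglongrightarrow> 1" using tendsto_diff[OF tendsto_const lim, of 1] by simp
  show ?thesis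
    by (rule tendsto_sandwich[OF ev _ lim1 tendsto_const]) auto
qed

end
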